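(* For every compactum $X$ and every $\mathcal A\in M_\cup(M_\cup X)$ (regarded as an element of $M(MX)$), the capacity $\mu^\bullet X(\mathcal A)$ is a possibility capacity, i.e. $\mu^\bullet X(M_\cup(M_\cup X))\subset M_\cup X$. Explicitly, for all closed $B,C\subset X$, $\mu^\bullet X(\mathcal A)(B\cup C)=\max\{\mu^\bullet X(\mathcal A)(B),\mu^\bullet X(\mathcal A)(C)\}$.
   Context: A compactum is a compact Hausdorff space; $I=[0,1]$; $\mathcal F(X)$ denotes the family of closed subsets of $X$. An (upper-semicontinuous) capacity on a compactum $X$ is a function $\nu:\mathcal F(X)\to I$ such that: (1) $\nu(X)=1$, $\nu(\emptyset)=0$; (2) if $F\subset G$ then $\nu(F)\le\nu(G)$; (3) if $\nu(F)<a$ then there is an open set $O\supset F$ with $\nu(B)<a$ for every closed $B\subset O$. For open $U\subset X$ one puts $\nu(U)=\sup\{\nu(K): K\text{ closed},\ K\subset U\}$. $MX$ is the set of all capacities on $X$, topologized by the subbase consisting of the sets $\{c\in MX: c(F)<a\}$ ($F$ closed, $a\in I$) and $\{c\in MX: c(U)>a\}$ ($U$ open, $a\in I$); it is a compactum. A capacity $\nu$ is a possibility capacity if $\nu(A\cup B)=\max\{\nu(A),\nu(B)\}$ for all closed $A,B$; $M_\cup X$ denotes the (closed) subspace of $MX$ of possibility capacities. A capacity $\mathcal A$ on the compactum $M_\cup X$ is regarded as a capacity on $MX$ via $\mathcal A(\Phi)=\mathcal A(\Phi\cap M_\cup X)$ for closed $\Phi\subset MX$; in this way $M_\cup(M_\cup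 X)\subset M(MX)$. For a closed $F\subset X$ and $t\in I$ put $F_t=\{c\in MX: c(F)\ge t\}$. The map $\mu^\bullet X: M(MX)\to MX$ is defined by $\mu^\bullet X(\mathcal C)(F)=\max\{\mathcal C(F_t)\cdot t: t\in(0,1]\}$ (the maximum exists). *)

theory Defs
  imports "HOL-Analysis.Analysis"
begin

text \<open>A capacity is a function on closed sets; to make the space of capacities a set of
  honest functions we require it to vanish on non-closed sets (extensionality).\<close>

definition capacity :: "'a topology \<Rightarrow> ('a set \<Rightarrow> real) \<Rightarrow> bool" where
  "capacity X \<nu> \<longleftrightarrow>
     (\<forall>F. closedin X F \<longrightarrow> \<nu> F \<in> {0..1}) \<and>
     (\<forall>F. \<not> closedin X F \<longrightarrow> \<nu> F = 0) \<and>
     \<nu> (topspace X) = 1 \<and> \<nu> {} = 0 \<and>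
     (\<forall>F G. closedin X F \<and> closedin X G \<and> F \<subseteq> G \<longrightarrow> \<nu> F \<le> \<nu> G) \<and>
     (\<forall>F a. closedin X F \<and> \<nu> F < a \<longrightarrow>
        (\<exists>W. openin X W \<and> F \<subseteq> W \<and> (\<forall>B. closedin X B \<and> B \<subseteq> W \<longrightarrow> \<nu> B < a)))"

definition caps :: "'a topology \<Rightarrow> ('a set \<Rightarrow> real) set" where
  "caps X = {\<nu>. capacity X \<nu>}"

definition cap_open :: "'a topology \<Rightarrow> ('a set \<Rightarrow> real) \<Rightarrow> 'a set \<Rightarrow> real" where
  "cap_open X c U = Sup (c ` {K. closedin X K \<and> K \<subseteq> U})"

text \<open>The whole space \<open>MX\<close> is added so that the topspace is exactly \<open>MX\<close>.\<close>
definition caps_top :: "'a topology \<Rightarrow> ('a set \<Rightarrow> real) topology" where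
  "caps_top X = topology_generated_by
     (insert (caps X)
       ({{c \<in> caps X. c F < a} | F a. closedin X F \<and> a \<in> {0..1}} \<union>
        {{c \<in> caps X. cap_open X c U > a} | U a. openin X U \<and> a \<in> {0..1}}))"

definition poss_capacity :: "'a topology \<Rightarrow> ('a set \<Rightarrow> real) \<Rightarrow> bool" where
  "poss_capacity X \<nu> \<longleftrightarrow> capacity X \<nu> \<and>
     (\<forall>A B. closedin X A \<and> closedin X B \<longrightarrow> \<nu> (A \<union> B) = max (\<nu> A) (\<nu> B))"

definition poss_caps :: "'a topology \<Rightarrow> ('a set \<Rightarrow> real) set" where
  "poss_caps X = {\<nu>. poss_capacity X \<nu>}"

definition poss_caps_top :: "'a topology \<Rightarrow> ('a set \<Rightarrow> real) topology" where
  "poss_caps_top X = subtopology (caps_top X) (poss_caps X)"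

text \<open>A capacity on \<open>M\<^sub>\<union>X\<close> regarded as a capacity on \<open>MX\<close>:
  \<open>\<A>(\<Phi>) = \<A>(\<Phi> \<inter> M\<^sub>\<union>X)\<close> for closed \<open>\<Phi> \<subseteq> MX\<close>.\<close>
definition lift_cap :: "'a topology \<Rightarrow> (('a set \<Rightarrow> real) set \<Rightarrow> real) \<Rightarrow> ('a set \<Rightarrow> real) set \<Rightarrow> real" where
  "lift_cap X \<A> \<Phi> = (if closedin (caps_top X) \<Phi> then \<A> (\<Phi> \<inter> poss_caps X) else 0)"

definition level_set :: "'a topology \<Rightarrow> 'a set \<Rightarrow> real \<Rightarrow> ('a set \<Rightarrow> real) set" where
  "level_set X F t = {c \<in> caps X. c F \<ge> t}"

text \<open>\<open>\<mu>\<^sup>\<bullet>X(\<C>)(F) = max{\<C>(F\<^sub>t)\<cdot>t : t \<in> (0,1]}\<close>; the maximum exists, so it equals the supremum.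
  On non-closed sets the value is 0 (extensionality convention).\<close>
definition mu_bullet :: "'a topology \<Rightarrow> (('a set \<Rightarrow> real) set \<Rightarrow> real) \<Rightarrow> 'a set \<Rightarrow> real" where
  "mu_bullet X \<C> F = (if closedin X F
     then Sup ((\<lambda>t. \<C> (level_set X F t) * t) ` {0<..1}) else 0)"

end

theory Submission
  imports Defs
begin


lemma topspace_caps_top[simp]: "topspace (caps_top X) = caps X"
  unfolding caps_top_def by (subst topology_generated_by_topspace) auto

lemma openin_caps_lt:
  assumes "closedin X F" "a \<in> {0..1}"
  shows "openin (caps_top X) {c \<in> caps X. c F < a}"
  unfolding caps_top_def by (rule topology_generated_by_Basis) (use assms in blast)

lemma openin_caps_gt:
  assumes "openin X U" "a \<in> {0..1}"
  shows "openin (caps_top X) {c \<in> caps X. cap_open X c U > a}"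
  unfolding caps_top_def by (rule topology_generated_by_Basis) (use assms in blast)

lemma capacityD:
  assumes "capacity X c"
  shows "\<And>F. closedin X F \<Longrightarrow> 0 \<le> c F" "\<And>F. closedin X F \<Longrightarrow> c F \<le> 1"
    "\<And>F. \<not> closedin X F \<Longrightarrow> c F = 0" "c (topspace X) = 1" "c {} = 0"
    "\<And>F G. closedin X F \<Longrightarrow> closedin X G \<Longrightarrow> F \<subseteq> G \<Longrightarrow> c F \<le> c G"
    "\<And>F a. closedin X F \<Longrightarrow> c F < a \<Longrightarrow>
        (\<exists>W. openin X W \<and> F \<subseteq> W \<and> (\<forall>B. closedin X B \<and> B \<subseteq> W \<longrightarrow> c B < a))"
  using assms unfolding capacity_def by auto

lemma cap_le1: "capacity X c \<Longrightarrow> c F \<le> 1"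
  by (metis capacityD(2,3) zero_le_one)
lemma cap_ge0: "capacity X c \<Longrightarrow> 0 \<le> c F"
  by (metis capacityD(1,3) order_refl)

lemma cap_open_ge:
  assumes "capacity X c" "closedin X K" "K \<subseteq> U"
  shows "c K \<le> cap_open X c U"
  unfolding cap_open_def
  by (rule cSup_upper) (use assms cap_le1 in \<open>auto intro!: bdd_aboveI[where M=1]\<close>)

lemma level_closed:
  assumes "closedin X F" "t \<in> {0..1}"
  shows "closedin (caps_top X) (level_set X F t)"
proof -
  have "level_set X F t = caps X - {c \<in> caps X. c F < t}"
    unfolding level_set_def by auto
  moreover have "closedin (caps_top X) (topspace (caps_top X) - {c \<in> caps X. c F < t})"
    by (rule closedin_diff[OF closedin_topspace openin_caps_lt[OF assms]])
  ultimately show ?thesis by simp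
qed



definition subb :: "'a topology \<Rightarrow> ('a set \<Rightarrow> real) set set" where
  "subb X = insert (caps X)
       ({{c \<in> caps X. c F < a} | F a. closedin X F \<and> a \<in> {0..1}} \<union>
        {{c \<in> caps X. cap_open X c U > a} | U a. openin X U \<and> a \<in> {0..1}})"

lemma Union_subb: "\<Union>(subb X) = caps X"
  unfolding subb_def by auto

lemma caps_top_alt:
  "caps_top X = topology (arbitrary union_of (finite intersection_of (\<lambda>x. x \<in> subb X) relative_to \<Union>(subb X)))"
proof -
  have eq: "(finite intersection_of (\<lambda>x. x \<in> subb X) relative_to \<Union>(subb X)) = finite' intersection_of (\<lambda>x. x \<in> subb X)"
  proof (intro ext iffI)
    fix T assume "(finite intersection_of (\<lambda>x. x \<in> subb X) relative_to \<Union>(subb X)) T"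
    then obtain F where F: "finite F" "F \<subseteq> subb X" "T = \<Inter>F \<inter> caps X"
      unfolding relative_to_def intersection_of_def Union_subb by auto
    have "caps X \<in> subb X" unfolding subb_def by auto
    then show "(finite' intersection_of (\<lambda>x. x \<in> subb X)) T"
      unfolding intersection_of_def using F
      by (intro exI[of _ "insert (caps X) F"]) auto
  next
    fix T assume "(finite' intersection_of (\<lambda>x. x \<in> subb X)) T"
    then obtain F where F: "finite F" "F \<noteq> {}" "F \<subseteq> subb X" "T = \<Inter>F"
      unfolding intersection_of_def by auto
    then have "T \<subseteq> \<Union>(subb X)" by auto
    then show "(finite intersection_of (\<lambda>x. x \<in> subb X) relative_to \<Union>(subb X)) T"
      unfolding relative_to_def intersection_of_def using F
      by (intro exI[of _ T]) auto
  qed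
  have "caps_top X = topology_generated_by (subb X)"
    by (simp add: caps_top_def subb_def)
  then show ?thesis
    by (simp only: eq generate_topology_on_eq)
qed



lemma caps_empty: "topspace X = {} \<Longrightarrow> caps X = {}"
  unfolding caps_def capacity_def by auto

lemma compact_caps: "compact_space (caps_top X)"
proof (rule Alexander_subbase[OF caps_top_alt[symmetric]])
  fix C assume C: "C \<subseteq> subb X" "\<Union>C = topspace (caps_top X)"
  show "\<exists>C'. finite C' \<and> C' \<subseteq> C \<and> \<Union>C' = topspace (caps_top X)"
  proof (rule ccontr)
    assume nf: "\<not> ?thesis"
    have nf': "\<exists>c\<in>caps X. c \<notin> \<Union>C'" if "finite C'" "C' \<subseteq> C" for C'
    proof -
      have "\<Union>C' \<subseteq> caps X" using that C by auto
      moreover have "\<Union>C' \<noteq> caps X" using nf that by auto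
      ultimately show ?thesis by blast
    qed
    have Xne: "topspace X \<noteq> {}"
    proof
      assume "topspace X = {}"
      then have "caps X = {}" by (rule caps_empty)
      then show False using nf'[of "{}"] by auto
    qed
    define I where "I = {(F,a). closedin X F \<and> a\<in>{0..1} \<and> {c\<in>caps X. c F < a} \<in> C}"
    define E where "E V = insert 0 {a. \<exists>F. (F,a)\<in>I \<and> F \<subseteq> V} \<union> (if V = topspace X then {1} else {})" for V
    define e where "e V = Sup (E V)" for V
    define c0 where "c0 F = (if closedin X F then Inf (e ` {V. openin X V \<and> F \<subseteq> V}) else 0)" for F
    have Ebdd: "bdd_above (E V)" for V
      unfolding E_def I_def by (cases "V = topspace X"; rule bdd_aboveI[where M=1]; auto)
    have e0: "0 \<le> e V" for V
      unfolding e_def by (rule cSup_upper[OF _ Ebdd]) (simp add: E_def)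
    have e1: "e V \<le> 1" for V
      unfolding e_def by (cases "V = topspace X"; rule cSup_least; auto simp: E_def I_def)
    have elow: "a \<le> e V" if "(F,a)\<in>I" "F \<subseteq> V" for F a V
      unfolding e_def by (rule cSup_upper[OF _ Ebdd]) (use that in \<open>auto simp: E_def\<close>)
    have eup: "e V \<le> b" if "\<And>F a. (F,a)\<in>I \<Longrightarrow> F \<subseteq> V \<Longrightarrow> a \<le> b" "0 \<le> b"
      "V = topspace X \<Longrightarrow> 1 \<le> b" for V b
      unfolding e_def by (cases "V = topspace X"; rule cSup_least; use that in \<open>auto simp: E_def\<close>)
    have etop: "e (topspace X) = 1"
    proof -
      have "1 \<in> E (topspace X)" by (simp add: E_def)
      then have "1 \<le> e (topspace X)" unfolding e_def by (rule cSup_upper[OF _ Ebdd])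
      then show ?thesis using e1[of "topspace X"] by linarith
    qed
    have SinC: "{c\<in>caps X. c F < a} \<in> C" if "(F,a) \<in> I" for F a
      using that unfolding I_def by auto
    have eempty: "e {} = 0"
    proof (rule order_antisym[OF eup e0])
      fix F a assume "(F,a)\<in>I" "F \<subseteq> {}"
      then obtain c where "c \<in> caps X" "c \<notin> {c\<in>caps X. c F < a}"
        using nf'[of "{{c\<in>caps X. c F < a}}"] SinC by auto
      then show "a \<le> 0" using \<open>F \<subseteq> {}\<close> by (auto simp: caps_def capacity_def)
    qed (use Xne in auto)
    define OV where "OV F = {V. openin X V \<and> F \<subseteq> V}" for F
    have OVne: "OV F \<noteq> {}" if "closedin X F" for F
      using that closedin_subset unfolding OV_def by blast
    have ebdd: "bdd_below (e ` OV F)" for F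
      by (rule bdd_belowI[where m=0]) (use e0 in auto)
    have c0le: "c0 F \<le> e V" if "closedin X F" "openin X V" "F \<subseteq> V" for F V
      unfolding c0_def using that by (simp add: cInf_lower[OF _ ebdd[unfolded OV_def]])
    have c0ge: "b \<le> c0 F" if "closedin X F" "\<And>V. openin X V \<Longrightarrow> F \<subseteq> V \<Longrightarrow> b \<le> e V" for F b
      unfolding c0_def using that OVne[of F] unfolding OV_def
      by (auto intro!: cINF_greatest)
    have cap0: "capacity X c0"
      unfolding capacity_def
    proof (intro conjI allI impI)
      fix F assume F: "closedin X F"
      show "c0 F \<in> {0..1}"
        using c0ge[OF F, of 0] e0 c0le[OF F _ closedin_subset[OF F]] e1
        by (auto intro: order_trans)
    next
      fix F assume "\<not> closedin X F" then show "c0 F = 0" by (simp add: c0_def)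
    next
      show "c0 (topspace X) = 1"
      proof -
        have "1 \<le> c0 (topspace X)"
        proof (rule c0ge)
          fix V assume "openin X V" "topspace X \<subseteq> V"
          then have "V = topspace X" using openin_subset by blast
          then show "1 \<le> e V" using etop by simp
        qed auto
        then show ?thesis using c0le[of "topspace X" "topspace X"] etop by auto
      qed
    next
      show "c0 {} = 0"
        using c0le[of "{}" "{}"] c0ge[of "{}" 0] eempty e0 by auto
    next
      fix F G assume "closedin X F \<and> closedin X G \<and> F \<subseteq> G"
      then show "c0 F \<le> c0 G"
        by (intro c0ge) (auto intro: c0le)
    next
      fix F a assume Fa: "closedin X F \<and> c0 F < a"
      then have "Inf (e ` OV F) < a" by (simp add: c0_def OV_def split: if_splits)
      then obtain V where V: "V \<in> OV F" "e V < a"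
        using OVne[of F] Fa by (auto simp: cInf_less_iff[OF _ ebdd])
      show "\<exists>W. openin X W \<and> F \<subseteq> W \<and> (\<forall>B. closedin X B \<and> B \<subseteq> W \<longrightarrow> c0 B < a)"
        using V c0le unfolding OV_def by (auto intro!: exI[of _ V] intro: le_less_trans)
    qed
    then have "c0 \<in> caps X" by (simp add: caps_def)
    then obtain S where S: "S \<in> C" "c0 \<in> S" using C by auto
    then have "S \<in> subb X" using C by auto
    then consider "S = caps X"
      | F a where "S = {c\<in>caps X. c F < a}" "closedin X F" "a \<in> {0..1}"
      | U b where "S = {c\<in>caps X. cap_open X c U > b}" "openin X U" "b \<in> {0..1}"
      unfolding subb_def by blast
    then show False
    proof cases
      case 1
      then show ?thesis using nf'[of "{S}"] S by auto
    next
      case (2 F a)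
      then have "(F,a) \<in> I" using S unfolding I_def by auto
      then have "a \<le> c0 F" using 2 by (intro c0ge) (auto intro: elow)
      then show ?thesis using S 2 by auto
    next
      case (3 U b)
      have "cap_open X c0 U \<le> b"
        unfolding cap_open_def
      proof (rule cSup_least)
        show "c0 ` {K. closedin X K \<and> K \<subseteq> U} \<noteq> {}" by auto
        fix y assume "y \<in> c0 ` {K. closedin X K \<and> K \<subseteq> U}"
        then obtain K where K: "closedin X K" "K \<subseteq> U" "y = c0 K" by auto
        have "e U \<le> b"
        proof (rule eup)
          fix F a assume Fa: "(F,a)\<in>I" "F \<subseteq> U"
          then obtain c where c: "c \<in> caps X" "c \<notin> {c\<in>caps X. c F < a}" "c \<notin> S"
            using nf'[of "{{c\<in>caps X. c F < a}, S}"] SinC S by auto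
          have "closedin X F" using Fa unfolding I_def by auto
          then have "c F \<le> cap_open X c U"
            using c Fa by (intro cap_open_ge) (auto simp: caps_def)
          then show "a \<le> b" using c 3 by auto
        next
          show "0 \<le> b" using 3 by auto
        next
          assume "U = topspace X"
          obtain c where c: "c \<in> caps X" "c \<notin> S"
            using nf'[of "{S}"] S by auto
          then have "c (topspace X) \<le> cap_open X c U"
            using \<open>U = topspace X\<close> by (intro cap_open_ge) (auto simp: caps_def)
          then show "1 \<le> b" using c 3 by (auto simp: caps_def capacity_def)
        qed
        then show "y \<le> b" using K c0le 3 by (auto intro: order_trans)
      qed
      then show ?thesis using S 3 by auto
    qed
  qed
qed



lemma poss_sub: "poss_caps X \<subseteq> caps X"
  unfolding poss_caps_def caps_def poss_capacity_def by auto

lemma closed_poss: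
  assumes N: "normal_space X"
  shows "closedin (caps_top X) (poss_caps X)"
proof -
  have "openin (caps_top X) (caps X - poss_caps X)"
  proof (subst openin_subopen, intro ballI)
    fix c assume c: "c \<in> caps X - poss_caps X"
    then have cc: "capacity X c" by (simp add: caps_def)
    then obtain A B where AB: "closedin X A" "closedin X B" "c (A \<union> B) \<noteq> max (c A) (c B)"
      using c unfolding poss_caps_def poss_capacity_def by auto
    have "c A \<le> c (A \<union> B)" "c B \<le> c (A \<union> B)"
      using AB capacityD(6)[OF cc] by auto
    then have lt: "max (c A) (c B) < c (A \<union> B)" using AB(3) by auto
    define r where "r = (max (c A) (c B) + c (A \<union> B)) / 2"
    have r: "max (c A) (c B) < r" "r < c (A \<union> B)" using lt unfolding r_def by auto
    have r01: "r \<in> {0..1}" using r cap_ge0[OF cc, of A] cap_le1[OF cc, of "A \<union> B"] by auto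
    obtain UA where UA: "openin X UA" "A \<subseteq> UA" "\<And>K. closedin X K \<Longrightarrow> K \<subseteq> UA \<Longrightarrow> c K < r"
      using capacityD(7)[OF cc AB(1), of r] r by auto
    obtain UB where UB: "openin X UB" "B \<subseteq> UB" "\<And>K. closedin X K \<Longrightarrow> K \<subseteq> UB \<Longrightarrow> c K < r"
      using capacityD(7)[OF cc AB(2), of r] r by auto
    obtain VA where VA: "openin X VA" "A \<subseteq> VA" "X closure_of VA \<subseteq> UA"
      using N AB UA unfolding normal_space_alt by meson
    obtain VB where VB: "openin X VB" "B \<subseteq> VB" "X closure_of VB \<subseteq> UB"
      using N AB UB unfolding normal_space_alt by meson
    define NN where "NN = {c'\<in>caps X. cap_open X c' (VA \<union> VB) > r} \<inter>
        {c'\<in>caps X. c' (X closure_of VA) < r} \<inter> {c'\<in>caps X. c' (X closure_of VB) < r}"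
    have "openin (caps_top X) NN"
      unfolding NN_def using VA VB r01
      by (intro openin_Int openin_caps_lt openin_caps_gt) auto
    moreover have "c \<in> NN"
    proof -
      have "c (A \<union> B) \<le> cap_open X c (VA \<union> VB)"
        using AB VA VB by (intro cap_open_ge[OF cc]) auto
      then show ?thesis unfolding NN_def using c r UA VA UB VB by auto
    qed
    moreover have "NN \<subseteq> caps X - poss_caps X"
    proof
      fix c' assume c': "c' \<in> NN"
      then have cc': "capacity X c'" by (simp add: NN_def caps_def)
      show "c' \<in> caps X - poss_caps X"
      proof (rule ccontr)
        assume "c' \<notin> caps X - poss_caps X"
        then have p: "poss_capacity X c'" using c' by (auto simp: NN_def poss_caps_def)
        have "r < Sup (c' ` {K. closedin X K \<and> K \<subseteq> VA \<union> VB})"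
          using c' by (simp add: NN_def cap_open_def)
        then obtain K where K: "closedin X K" "K \<subseteq> VA \<union> VB" "r < c' K"
          by (subst (asm) less_cSup_iff) (auto intro: bdd_aboveI[where M=1] cap_le1[OF cc'])
        have "K \<subseteq> X closure_of VA \<union> X closure_of VB"
          using K closure_of_subset VA VB openin_subset by (metis Un_mono order_trans)
        then have "c' K \<le> c' (X closure_of VA \<union> X closure_of VB)"
          using K by (intro capacityD(6)[OF cc']) auto
        also have "\<dots> = max (c' (X closure_of VA)) (c' (X closure_of VB))"
          using p unfolding poss_capacity_def by auto
        also have "\<dots> < r" using c' by (auto simp: NN_def)
        finally show False using K by auto
      qed
    qed
    ultimately show "\<exists>T. openin (caps_top X) T \<and> c \<in> T \<and> T \<subseteq> caps X - poss_caps X"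
      by blast
  qed
  then show ?thesis using poss_sub
    by (metis closedin_def topspace_caps_top double_diff order_refl)
qed



lemma key:
  assumes N: "normal_space X" and F: "closedin X F" and t: "t \<in> {0<..1}"
    and Phi: "closedin (caps_top X) Phi" and dis: "Phi \<inter> level_set X F t = {}"
  shows "\<exists>W. openin X W \<and> F \<subseteq> W \<and> (\<forall>B. closedin X B \<and> B \<subseteq> W \<longrightarrow> level_set X B t \<inter> Phi = {})"
proof -
  have cpt: "compactin (caps_top X) Phi"
    by (rule closedin_compact_space[OF compact_caps Phi])
  have PhiM: "Phi \<subseteq> caps X" using closedin_subset[OF Phi] by simp
  have ex: "\<exists>V. openin X V \<and> F \<subseteq> V \<and> c (X closure_of V) < t" if c: "c \<in> Phi" for c
  proof -
    have cc: "capacity X c" using c PhiM by (auto simp: caps_def)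
    have "c F < t" using c dis PhiM unfolding level_set_def by auto
    then obtain U where U: "openin X U" "F \<subseteq> U" "\<And>K. closedin X K \<Longrightarrow> K \<subseteq> U \<Longrightarrow> c K < t"
      using capacityD(7)[OF cc F \<open>c F < t\<close>] by auto
    obtain V where V: "openin X V" "F \<subseteq> V" "X closure_of V \<subseteq> U"
      using N F U unfolding normal_space_alt by meson
    show ?thesis using V U by (intro exI[of _ V]) auto
  qed
  define V where "V c = (SOME V. openin X V \<and> F \<subseteq> V \<and> c (X closure_of V) < t)" for c
  have V: "openin X (V c)" "F \<subseteq> V c" "c (X closure_of (V c)) < t" if "c \<in> Phi" for c
    using someI_ex[OF ex[OF that]] unfolding V_def by auto
  define Q where "Q c = {c'\<in>caps X. c' (X closure_of (V c)) < t}" for c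
  have Qo: "openin (caps_top X) (Q c)" if "c \<in> Phi" for c
    unfolding Q_def using t by (intro openin_caps_lt) auto
  have "Phi \<subseteq> \<Union>(Q ` Phi)"
    using V(3) PhiM unfolding Q_def by auto
  then obtain FF where FF: "finite FF" "FF \<subseteq> Q ` Phi" "Phi \<subseteq> \<Union>FF"
    using cpt Qo unfolding compactin_def by (metis (no_types, lifting) imageE)
  then obtain D where D: "D \<subseteq> Phi" "finite D" "FF = Q ` D"
    by (meson finite_subset_image)
  define W where "W = (\<Inter>c\<in>D. V c) \<inter> topspace X"
  have "openin X W" unfolding W_def using D V(1) by auto
  moreover have "F \<subseteq> W" unfolding W_def using D V(2) closedin_subset[OF F] by auto
  moreover have "level_set X B t \<inter> Phi = {}" if B: "closedin X B" "B \<subseteq> W" for B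
  proof (rule ccontr)
    assume "level_set X B t \<inter> Phi \<noteq> {}"
    then obtain c' where c': "c' \<in> Phi" "c' B \<ge> t" unfolding level_set_def by auto
    then obtain c where c: "c \<in> D" "c' \<in> Q c" using FF D by auto
    have "B \<subseteq> X closure_of (V c)"
      using B c closure_of_subset[of "V c" X] V(1)[of c] D openin_subset unfolding W_def by blast
    then have "c' B \<le> c' (X closure_of (V c))"
      using c' PhiM B by (intro capacityD(6)) (auto simp: caps_def)
    then show False using c c' unfolding Q_def by auto
  qed
  ultimately show ?thesis by blast
qed



lemma grid:
  assumes "0 < t" "t \<le> 1" "0 < N"
  shows "\<exists>k<N. real k / real N < t \<and> t \<le> (real k + 1) / real N"
proof -
  define m where "m = nat \<lceil>t * real N\<rceil>"
  have pos: "0 < t * real N" using assms by auto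
  have m1: "1 \<le> m" unfolding m_def using pos by linarith
  have "real m = of_int \<lceil>t * real N\<rceil>" unfolding m_def using pos by auto
  then have mle: "t * real N \<le> real m" "real m < t * real N + 1"
    by (simp_all add: ceiling_correct) linarith
  have mN: "m \<le> N"
  proof -
    have "t * real N \<le> real N" using assms by (simp add: mult_left_le_one_le)
    then show ?thesis unfolding m_def by (simp add: ceiling_le_iff nat_le_iff)
  qed
  define k where "k = m - 1"
  have rk: "real k + 1 = real m" unfolding k_def using m1 by auto
  show ?thesis
  proof (intro exI[of _ k] conjI)
    show "k < N" unfolding k_def using m1 mN by auto
    show "real k / real N < t" using mle rk assms by (simp add: divide_less_eq)
    show "t \<le> (real k + 1) / real N" using mle rk assms by (simp add: le_divide_eq)
  qed
qed



context
  fixes X :: "'a topology" and \<A> :: "('a set \<Rightarrow> real) set \<Rightarrow> real"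
  assumes cs: "compact_space X" and hs: "Hausdorff_space X"
    and Ap: "\<A> \<in> poss_caps (poss_caps_top X)"
begin

definition "P = poss_caps X"
definition "PT = poss_caps_top X"
definition "g F t = \<A> (level_set X F t \<inter> P)"

lemma N: "normal_space X"
  using cs hs compact_Hausdorff_or_regular_imp_normal_space by blast

lemma topPT: "topspace PT = P"
  unfolding PT_def P_def poss_caps_top_def using poss_sub by auto

lemma capA: "capacity PT \<A>"
  using Ap unfolding PT_def poss_caps_def poss_capacity_def by auto

lemma possA: "closedin PT S \<Longrightarrow> closedin PT T \<Longrightarrow> \<A> (S \<union> T) = max (\<A> S) (\<A> T)"
  using Ap unfolding PT_def poss_caps_def poss_capacity_def by auto

lemma closed_lev: "closedin X F \<Longrightarrow> t \<in> {0<..1} \<Longrightarrow> closedin PT (level_set X F t \<inter> P)"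
  unfolding PT_def P_def poss_caps_top_def closedin_subtopology
  by (intro exI[of _ "level_set X F t"]) (auto intro: level_closed)

lemma g01: "0 \<le> g F t" "g F t \<le> 1"
  unfolding g_def using cap_ge0[OF capA] cap_le1[OF capA] by auto

lemma g_mono_t: "closedin X F \<Longrightarrow> s \<in> {0<..1} \<Longrightarrow> t \<in> {0<..1} \<Longrightarrow> s \<le> t \<Longrightarrow> g F t \<le> g F s"
  unfolding g_def
proof (rule capacityD(6)[OF capA])
  assume a: "closedin X F" "s \<in> {0<..1}" "t \<in> {0<..1}" "s \<le> t"
  show "closedin PT (level_set X F t \<inter> P)" "closedin PT (level_set X F s \<inter> P)"
    using a by (auto intro: closed_lev)
  show "level_set X F t \<inter> P \<subseteq> level_set X F s \<inter> P" using a by (auto simp: level_set_def)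
qed

lemma g_mono_F: "closedin X F \<Longrightarrow> closedin X G \<Longrightarrow> F \<subseteq> G \<Longrightarrow> t \<in> {0<..1} \<Longrightarrow> g F t \<le> g G t"
  unfolding g_def
proof (rule capacityD(6)[OF capA])
  assume a: "closedin X F" "closedin X G" "F \<subseteq> G" "t \<in> {0<..1}"
  show "level_set X F t \<inter> P \<subseteq> level_set X G t \<inter> P"
  proof
    fix c assume c: "c \<in> level_set X F t \<inter> P"
    then have "c F \<le> c G" using a by (intro capacityD(6)) (auto simp: level_set_def caps_def)
    then show "c \<in> level_set X G t \<inter> P" using c by (auto simp: level_set_def)
  qed
qed (auto simp: closed_lev)

definition "mu F = Sup ((\<lambda>t. g F t * t) ` {0<..1})"

lemma bdd: "bdd_above ((\<lambda>t. g F t * t) ` {0<..1})"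
  by (rule bdd_aboveI[where M=1]) (auto intro!: mult_le_one g01)

lemma mu_le: "(\<And>t. t \<in> {0<..1} \<Longrightarrow> g F t * t \<le> b) \<Longrightarrow> mu F \<le> b"
  unfolding mu_def by (rule cSUP_least) auto

lemma mu_ge: "t \<in> {0<..1} \<Longrightarrow> g F t * t \<le> mu F"
  unfolding mu_def by (rule cSUP_upper[OF _ bdd])

lemma mu_eq: "mu_bullet X (lift_cap X \<A>) F = (if closedin X F then mu F else 0)"
proof (cases "closedin X F")
  case True
  have "lift_cap X \<A> (level_set X F t) = g F t" if "t \<in> {0<..1}" for t
    using level_closed[OF True, of t] that unfolding lift_cap_def g_def P_def by auto
  then show ?thesis unfolding mu_bullet_def mu_def using True
    by (auto intro!: SUP_cong)
qed (simp add: mu_bullet_def)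


lemma g_union: "closedin X B \<Longrightarrow> closedin X C \<Longrightarrow> t \<in> {0<..1} \<Longrightarrow> g (B \<union> C) t = max (g B t) (g C t)"
proof -
  assume a: "closedin X B" "closedin X C" "t \<in> {0<..1}"
  have "level_set X (B \<union> C) t \<inter> P = (level_set X B t \<inter> P) \<union> (level_set X C t \<inter> P)"
  proof -
    have "(t \<le> c (B \<union> C)) = (t \<le> c B \<or> t \<le> c C)" if "c \<in> P" for c
      using that a unfolding P_def poss_caps_def poss_capacity_def by (auto simp: le_max_iff_disj)
    then show ?thesis unfolding level_set_def by auto
  qed
  then show ?thesis unfolding g_def using a by (simp add: possA closed_lev)
qed

lemma mu_union: "closedin X B \<Longrightarrow> closedin X C \<Longrightarrow> mu (B \<union> C) = max (mu B) (mu C)"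
proof -
  assume a: "closedin X B" "closedin X C"
  have "mu (B \<union> C) \<le> max (mu B) (mu C)"
  proof (rule mu_le)
    fix t :: real assume t: "t \<in> {0<..1}"
    have "g (B \<union> C) t * t = max (g B t * t) (g C t * t)"
      using g_union[OF a t] t by (auto simp: max_def)
    also have "\<dots> \<le> max (mu B) (mu C)" using mu_ge[OF t, of B] mu_ge[OF t, of C] by auto
    finally show "g (B \<union> C) t * t \<le> max (mu B) (mu C)" .
  qed
  moreover have "mu B \<le> mu (B \<union> C)" "mu C \<le> mu (B \<union> C)"
    by (rule mu_le; rule order_trans[OF _ mu_ge];
        auto intro!: mult_right_mono g_mono_F simp: a closedin_Un)+
  ultimately show ?thesis by linarith
qed

lemma mu_usc:
  assumes F: "closedin X F" and lt: "mu F < a"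
  shows "\<exists>W. openin X W \<and> F \<subseteq> W \<and> (\<forall>B. closedin X B \<and> B \<subseteq> W \<longrightarrow> mu B < a)"
proof -
  define s where "s = mu F"
  define a' where "a' = (s + a) / 2"
  have s0: "0 \<le> s" unfolding s_def using mu_ge[of 1 F] g01[of F 1] by auto
  have sa: "s < a'" "a' < a" using lt unfolding a'_def s_def by auto
  obtain N where Nn: "0 < N" "inverse (real N) < a' - s"
    using ex_inverse_of_nat_less[of "a' - s"] sa by auto
  have N0: "0 < N" and invN: "1 / real N < a' - s" using Nn by (auto simp: divide_inverse)
  have ex: "\<exists>W. openin X W \<and> F \<subseteq> W \<and> (\<forall>B. closedin X B \<and> B \<subseteq> W \<longrightarrow>
              g B (real k / real N) * ((real k + 1) / real N) < a')" if k: "k \<in> {1..<N}" for k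
  proof -
    define tk where "tk = real k / real N"
    have tk: "tk \<in> {0<..1}" using k N0 unfolding tk_def by auto
    have "g F tk * tk \<le> s" unfolding s_def by (rule mu_ge[OF tk])
    moreover have "g F tk * ((real k + 1) / real N) = g F tk * tk + g F tk / real N"
      unfolding tk_def by (simp add: add_divide_distrib distrib_left)
    moreover have "g F tk / real N \<le> 1 / real N"
      using g01[of F tk] N0 by (simp add: divide_right_mono)
    ultimately have "g F tk * ((real k + 1) / real N) < a'" using invN by linarith
    moreover have q: "0 < (real k + 1) / real N" using N0 by auto
    ultimately have glt: "g F tk < a' / ((real k + 1) / real N)"
      by (simp only: pos_less_divide_eq)
    obtain Ou where Ou: "openin PT Ou" "level_set X F tk \<inter> P \<subseteq> Ou"
      "\<And>K. closedin PT K \<Longrightarrow> K \<subseteq> Ou \<Longrightarrow> \<A> K < a' / ((real k + 1) / real N)"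
      using capacityD(7)[OF capA closed_lev[OF F tk] glt[unfolded g_def]] by auto
    define Phi where "Phi = P - Ou"
    have "closedin PT (topspace PT - Ou)" by (rule closedin_diff[OF closedin_topspace Ou(1)])
    then have "closedin PT Phi" unfolding Phi_def topPT .
    then have "closedin (subtopology (caps_top X) (poss_caps X)) Phi"
      unfolding PT_def poss_caps_top_def .
    then have Phic: "closedin (caps_top X) Phi"
      by (rule closedin_trans_full[OF _ closed_poss[OF N]])
    have "Phi \<inter> level_set X F tk = {}" using Ou(2) unfolding Phi_def by auto
    then obtain W where W: "openin X W" "F \<subseteq> W"
      "\<And>B. closedin X B \<Longrightarrow> B \<subseteq> W \<Longrightarrow> level_set X B tk \<inter> Phi = {}"
      using key[OF N F tk Phic] by auto
    show ?thesis
    proof (intro exI[of _ W] conjI allI impI)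
      fix B assume B: "closedin X B \<and> B \<subseteq> W"
      then have "level_set X B tk \<inter> P \<subseteq> Ou" using W(3)[of B] unfolding Phi_def by auto
      then have "g B tk < a' / ((real k + 1) / real N)"
        unfolding g_def using B by (intro Ou(3) closed_lev tk) auto
      then show "g B (real k / real N) * ((real k + 1) / real N) < a'"
        using q unfolding tk_def by (simp only: pos_less_divide_eq)
    next
      show "openin X W" by (rule W(1))
      show "F \<subseteq> W" by (rule W(2))
    qed
  qed
  then have ex': "\<forall>k\<in>{1..<N}. \<exists>W. openin X W \<and> F \<subseteq> W \<and> (\<forall>B. closedin X B \<and> B \<subseteq> W \<longrightarrow>
              g B (real k / real N) * ((real k + 1) / real N) < a')" by blast
  obtain Wf where Wf0: "\<forall>k\<in>{1..<N}. openin X (Wf k) \<and> F \<subseteq> Wf k \<and> (\<forall>B. closedin X B \<and> B \<subseteq> Wf k \<longrightarrow>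
              g B (real k / real N) * ((real k + 1) / real N) < a')"
    using bchoice[OF ex'] by (elim exE)
  have Wf: "openin X (Wf k) \<and> F \<subseteq> Wf k \<and> (\<forall>B. closedin X B \<and> B \<subseteq> Wf k \<longrightarrow>
              g B (real k / real N) * ((real k + 1) / real N) < a')" if "k \<in> {1..<N}" for k
    using Wf0 that by blast
  define W where "W = (\<Inter>k\<in>{1..<N}. Wf k) \<inter> topspace X"
  have Wo: "openin X W" unfolding W_def using Wf by (intro openin_INT) auto
  have FW: "F \<subseteq> W" unfolding W_def using Wf closedin_subset[OF F] by blast
  have muB: "mu B < a" if B: "closedin X B" "B \<subseteq> W" for B
  proof -
    have "mu B \<le> a'"
    proof (rule mu_le)
      fix t :: real assume t: "t \<in> {0<..1}"
      then obtain k where k: "k < N" "real k / real N < t" "t \<le> (real k + 1) / real N"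
        using grid[of t N] N0 by auto
      show "g B t * t \<le> a'"
      proof (cases "k = 0")
        case True
        then have "g B t * t \<le> 1 / real N"
        proof -
          have "g B t * t \<le> 1 * t" using g01[of B t] t by (intro mult_right_mono) auto
          also have "\<dots> \<le> 1 / real N" using k True by simp
          finally show ?thesis .
        qed
        then show ?thesis using invN s0 by linarith
      next
        case False
        then have k1: "k \<in> {1..<N}" using k by auto
        have tk: "real k / real N \<in> {0<..1}" using k1 N0 by auto
        have gm: "g B t \<le> g B (real k / real N)"
          using k by (intro g_mono_t[OF B(1) tk t]) simp
        have "g B t * t \<le> g B (real k / real N) * ((real k + 1) / real N)"
          using gm k(3) t g01[of B t] by (intro mult_mono) auto
        also have "\<dots> < a'"
        proof -
          have "B \<subseteq> Wf k" using B(2) k1 unfolding W_def by blast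
          then show ?thesis using Wf[OF k1] B(1) by blast
        qed
        finally show ?thesis by linarith
      qed
    qed
    then show ?thesis using sa by linarith
  qed
  show ?thesis using Wo FW muB by (intro exI[of _ W]) simp
qed


lemma result: "mu_bullet X (lift_cap X \<A>) \<in> poss_caps X"
proof -
  let ?m = "mu_bullet X (lift_cap X \<A>)"
  have one: "(1::real) \<in> {0<..1}" by simp
  have mu0: "0 \<le> mu F" for F
  proof -
    have "0 \<le> g F 1 * 1" using g01[of F 1] by simp
    then show ?thesis using mu_ge[OF one, of F] by linarith
  qed
  have mu1: "mu F \<le> 1" for F
  proof (rule mu_le)
    fix t :: real assume "t \<in> {0<..1}"
    then show "g F t * t \<le> 1" using g01[of F t] by (intro mult_le_one) auto
  qed
  have levtop: "level_set X (topspace X) t \<inter> P = P" if "t \<in> {0<..1}" for t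
  proof -
    have "c \<in> caps X \<and> t \<le> c (topspace X)" if "c \<in> P" for c
    proof -
      have "c \<in> caps X" using that poss_sub[of X] unfolding P_def by blast
      moreover then have "c (topspace X) = 1" unfolding caps_def capacity_def by blast
      ultimately show ?thesis using \<open>t \<in> {0<..1}\<close> by simp
    qed
    then show ?thesis unfolding level_set_def by blast
  qed
  have levemp: "level_set X {} t \<inter> P = {}" if "t \<in> {0<..1}" for t
  proof -
    have "\<not> t \<le> c {}" if "c \<in> caps X" for c
    proof -
      have "c {} = 0" using that unfolding caps_def capacity_def by blast
      then show ?thesis using \<open>t \<in> {0<..1}\<close> by simp
    qed
    then show ?thesis unfolding level_set_def by blast
  qed
  have gtop: "g (topspace X) t = 1" if "t \<in> {0<..1}" for t
    unfolding g_def levtop[OF that] using capacityD(4)[OF capA] topPT by simp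
  have gemp: "g {} t = 0" if "t \<in> {0<..1}" for t
    unfolding g_def levemp[OF that] using capacityD(5)[OF capA] by simp
  have mtop: "mu (topspace X) = 1"
    using mu_ge[OF one, of "topspace X"] gtop[OF one] mu1[of "topspace X"] by simp
  have memp: "mu {} = 0"
  proof -
    have "mu {} \<le> 0" by (rule mu_le) (simp add: gemp)
    then show ?thesis using mu0[of "{}"] by simp
  qed
  have mmono: "mu F \<le> mu G" if a: "closedin X F" "closedin X G" "F \<subseteq> G" for F G
  proof (rule mu_le)
    fix t :: real assume t: "t \<in> {0<..1}"
    have "g F t * t \<le> g G t * t" using g_mono_F[OF a t] t by (intro mult_right_mono) auto
    also have "\<dots> \<le> mu G" by (rule mu_ge[OF t])
    finally show "g F t * t \<le> mu G" .
  qed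
  have cap: "capacity X ?m"
    unfolding capacity_def mu_eq
  proof (intro conjI allI impI)
    show "(if closedin X (topspace X) then mu (topspace X) else 0) = 1" using mtop by simp
    show "(if closedin X {} then mu {} else 0) = 0" using memp by simp
  next
    fix F assume "closedin X F"
    then show "(if closedin X F then mu F else 0) \<in> {0..1}" using mu0[of F] mu1[of F] by simp
  next
    fix F assume "\<not> closedin X F"
    then show "(if closedin X F then mu F else 0) = 0" by simp
  next
    fix F G assume a: "closedin X F \<and> closedin X G \<and> F \<subseteq> G"
    then show "(if closedin X F then mu F else 0) \<le> (if closedin X G then mu G else 0)"
      using mmono[of F G] by simp
  next
    fix F a assume a: "closedin X F \<and> (if closedin X F then mu F else 0) < a"
    then have Fc: "closedin X F" and Fa: "mu F < a" by auto
    obtain W where W: "openin X W \<and> F \<subseteq> W \<and> (\<forall>B. closedin X B \<and> B \<subseteq> W \<longrightarrow> mu B < a)"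
      using mu_usc[OF Fc Fa] by (rule exE)
    show "\<exists>W. openin X W \<and> F \<subseteq> W \<and> (\<forall>B. closedin X B \<and> B \<subseteq> W \<longrightarrow> (if closedin X B then mu B else 0) < a)"
      using W by (intro exI[of _ W]) simp
  qed
  moreover have "?m (A \<union> B) = max (?m A) (?m B)" if "closedin X A" "closedin X B" for A B
    using that by (simp add: mu_eq mu_union closedin_Un)
  ultimately show ?thesis unfolding poss_caps_def poss_capacity_def by blast
qed

end

theorem lemma1:
  fixes X :: "'a topology" and \<A> :: "('a set \<Rightarrow> real) set \<Rightarrow> real"
  assumes "compact_space X" and "Hausdorff_space X"
    and "\<A> \<in> poss_caps (poss_caps_top X)"
  shows "mu_bullet X (lift_cap X \<A>) \<in> poss_caps X"
  by (rule result[OF assms])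

end
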